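(* Let $G$ be a topological group, $\theta\in\mathrm{Aut}(G)$ an involution, $K:=G^\theta$, and let $(X,o)\supset (G/K,eK)$ be a pointed reflection space containing $G/K$. Let $\{g_i, i\in I\}$ be a generating system of the group $G$. Furthermore, let $T_i\in\mathrm{Trans}(X)|_{G/K}$, $i\in I$, be elements that act on $G/K$ via left multiplication with $g_i$: $T_i( hK)=(g_ih)K$ for all $i\in I$ and $h\in G$. Then the set $\{T_i, {}^{s_o}(T_i^{-1}) \}$ is a generating system of the group $\mathrm{Trans}(X)|_{G/K}$.
   Context: $G/K$ is a reflection space with reflection $(gK,hK)\mapsto \tau(g)\theta(h)K$, where $\tau(g)=g\theta(g)^{-1}$, and base point $o=eK$. A reflection space has continuous $(x,y)\mapsto x.y$ satisfying $x.x=x$, $x.(x.y)=y$, $x.(y.z)=(x.y).(x.z)$. For $x\in X$, $s_x:y\mapsto x.y$ is the elementary reflection, and $\mathrm{Trans}(X)|_{G/K}:=\langle s_{y}\circ s_o\mid y\in G/K\rangle\le\mathrm{Trans}(X)$ is the restricted group of transvections. ${}^hg$ denotes left conjugation $hgh^{-1}$. *)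

theory Defs
  imports "HOL-Analysis.Analysis" "HOL-Algebra.Algebra"
begin

definition topological_group :: "('a, 'b) monoid_scheme \<Rightarrow> 'a topology \<Rightarrow> bool" where
  "topological_group G TG \<longleftrightarrow> group G \<and> topspace TG = carrier G \<and>
     continuous_map (prod_topology TG TG) TG (\<lambda>(x, y). x \<otimes>\<^bsub>G\<^esub> y) \<and>
     continuous_map TG TG (\<lambda>x. inv\<^bsub>G\<^esub> x)"

definition reflection_space :: "'x topology \<Rightarrow> ('x \<Rightarrow> 'x \<Rightarrow> 'x) \<Rightarrow> bool" where
  "reflection_space TX rf \<longleftrightarrow>
     continuous_map (prod_topology TX TX) TX (\<lambda>(x, y). rf x y) \<and>
     (\<forall>x\<in>topspace TX. rf x x = x) \<and>
     (\<forall>x\<in>topspace TX. \<forall>y\<in>topspace TX. rf x (rf x y) = y) \<and>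
     (\<forall>x\<in>topspace TX. \<forall>y\<in>topspace TX. \<forall>z\<in>topspace TX.
        rf x (rf y z) = rf (rf x y) (rf x z))"

definition elem_refl :: "'x set \<Rightarrow> ('x \<Rightarrow> 'x \<Rightarrow> 'x) \<Rightarrow> 'x \<Rightarrow> ('x \<Rightarrow> 'x)" where
  "elem_refl Xs rf x = restrict (rf x) Xs"

definition Trans :: "'x set \<Rightarrow> ('x \<Rightarrow> 'x \<Rightarrow> 'x) \<Rightarrow> ('x \<Rightarrow> 'x) set" where
  "Trans Xs rf = generate (BijGroup Xs)
     {elem_refl Xs rf x \<otimes>\<^bsub>BijGroup Xs\<^esub> elem_refl Xs rf y | x y. x \<in> Xs \<and> y \<in> Xs}"

definition Trans_restr :: "'x set \<Rightarrow> ('x \<Rightarrow> 'x \<Rightarrow> 'x) \<Rightarrow> 'x \<Rightarrow> 'x set \<Rightarrow> ('x \<Rightarrow> 'x) set" where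
  "Trans_restr Xs rf bp Y = generate (BijGroup Xs)
     {elem_refl Xs rf y \<otimes>\<^bsub>BijGroup Xs\<^esub> elem_refl Xs rf bp | y. y \<in> Y}"

definition lconj :: "('a, 'b) monoid_scheme \<Rightarrow> 'a \<Rightarrow> 'a \<Rightarrow> 'a" where
  "lconj G h g = h \<otimes>\<^bsub>G\<^esub> g \<otimes>\<^bsub>G\<^esub> inv\<^bsub>G\<^esub> h"

end

theory Submission imports Defs begin

lemma bij_mult_apply:
  assumes "f \<in> carrier (BijGroup S)" "g \<in> carrier (BijGroup S)" "z \<in> S"
  shows "(f \<otimes>\<^bsub>BijGroup S\<^esub> g) z = f (g z)"
  using assms by (simp add: BijGroup_def compose_def)

lemma bij_one_apply: "z \<in> S \<Longrightarrow> \<one>\<^bsub>BijGroup S\<^esub> z = z"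
  by (simp add: BijGroup_def)

lemma bij_in: "f \<in> carrier (BijGroup S) \<Longrightarrow> z \<in> S \<Longrightarrow> f z \<in> S"
  by (auto simp: BijGroup_def dest: Bij_imp_funcset)

lemma bij_eqI:
  assumes "f \<in> carrier (BijGroup S)" "g \<in> carrier (BijGroup S)" "\<And>z. z \<in> S \<Longrightarrow> f z = g z"
  shows "f = g"
proof -
  have "f \<in> extensional S" "g \<in> extensional S" using assms(1,2)
    by (auto simp: BijGroup_def Bij_imp_extensional)
  thus ?thesis using assms(3) by (rule extensionalityI)
qed

lemma bij_inv_apply:
  assumes "f \<in> carrier (BijGroup S)" "z \<in> S"
  shows "f ((inv\<^bsub>BijGroup S\<^esub> f) z) = z" "(inv\<^bsub>BijGroup S\<^esub> f) (f z) = z"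
    "(inv\<^bsub>BijGroup S\<^esub> f) z \<in> S"
proof -
  interpret B: group "BijGroup S" by (rule group_BijGroup)
  have i: "inv\<^bsub>BijGroup S\<^esub> f \<in> carrier (BijGroup S)" using assms by simp
  show "f ((inv\<^bsub>BijGroup S\<^esub> f) z) = z"
    using bij_mult_apply[OF assms(1) i assms(2)] B.r_inv[OF assms(1)] bij_one_apply[OF assms(2)] by simp
  show "(inv\<^bsub>BijGroup S\<^esub> f) (f z) = z"
    using bij_mult_apply[OF i assms(1) assms(2)] B.l_inv[OF assms(1)] bij_one_apply[OF assms(2)] by simp
  show "(inv\<^bsub>BijGroup S\<^esub> f) z \<in> S" using bij_in[OF i assms(2)] .
qed

definition AutR :: "'x set \<Rightarrow> ('x \<Rightarrow> 'x \<Rightarrow> 'x) \<Rightarrow> ('x \<Rightarrow> 'x) set" where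
  "AutR S rf = {\<phi> \<in> carrier (BijGroup S). \<forall>a\<in>S. \<forall>b\<in>S. \<phi> (rf a b) = rf (\<phi> a) (\<phi> b)}"

locale rsp =
  fixes S :: "'x set" and rf :: "'x \<Rightarrow> 'x \<Rightarrow> 'x"
  assumes cl: "\<And>x y. x \<in> S \<Longrightarrow> y \<in> S \<Longrightarrow> rf x y \<in> S"
    and iv: "\<And>x y. x \<in> S \<Longrightarrow> y \<in> S \<Longrightarrow> rf x (rf x y) = y"
    and ds: "\<And>x y z. x \<in> S \<Longrightarrow> y \<in> S \<Longrightarrow> z \<in> S \<Longrightarrow> rf x (rf y z) = rf (rf x y) (rf x z)"
begin

lemma s_carrier: "x \<in> S \<Longrightarrow> elem_refl S rf x \<in> carrier (BijGroup S)"
proof -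
  assume x: "x \<in> S"
  have b: "bij_betw (rf x) S S"
  proof (rule bij_betw_byWitness[where f'="rf x"])
    show "\<forall>a\<in>S. rf x (rf x a) = a" using iv x by blast
    show "\<forall>a\<in>S. rf x (rf x a) = a" using iv x by blast
    show "rf x ` S \<subseteq> S" using cl x by blast
    show "rf x ` S \<subseteq> S" using cl x by blast
  qed
  have "bij_betw (restrict (rf x) S) S S"
    using b by (subst bij_betw_cong[where g="rf x"]) simp_all
  thus ?thesis unfolding elem_refl_def BijGroup_def Bij_def by simp
qed

lemma s_apply: "z \<in> S \<Longrightarrow> elem_refl S rf x z = rf x z"
  by (simp add: elem_refl_def)

lemma s_sq: "x \<in> S \<Longrightarrow> elem_refl S rf x \<otimes>\<^bsub>BijGroup S\<^esub> elem_refl S rf x = \<one>\<^bsub>BijGroup S\<^esub>"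
proof -
  assume x: "x \<in> S"
  interpret B: group "BijGroup S" by (rule group_BijGroup)
  show ?thesis
  proof (rule bij_eqI)
    show "elem_refl S rf x \<otimes>\<^bsub>BijGroup S\<^esub> elem_refl S rf x \<in> carrier (BijGroup S)"
      using s_carrier[OF x] by simp
    show "\<one>\<^bsub>BijGroup S\<^esub> \<in> carrier (BijGroup S)" by simp
    fix z assume z: "z \<in> S"
    show "(elem_refl S rf x \<otimes>\<^bsub>BijGroup S\<^esub> elem_refl S rf x) z = \<one>\<^bsub>BijGroup S\<^esub> z"
      using bij_mult_apply[OF s_carrier[OF x] s_carrier[OF x] z] bij_one_apply[OF z] s_apply z x cl iv
      by simp
  qed
qed

lemma s_inv: "x \<in> S \<Longrightarrow> inv\<^bsub>BijGroup S\<^esub> (elem_refl S rf x) = elem_refl S rf x"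
  by (metis group.inv_equality group_BijGroup s_carrier s_sq)

lemma aut_subgroup: "subgroup (AutR S rf) (BijGroup S)"
proof -
  interpret B: group "BijGroup S" by (rule group_BijGroup)
  show ?thesis
  proof (rule B.subgroupI)
    show "AutR S rf \<subseteq> carrier (BijGroup S)" by (auto simp: AutR_def)
    show "AutR S rf \<noteq> {}"
    proof -
      have "\<one>\<^bsub>BijGroup S\<^esub> \<in> AutR S rf"
        unfolding AutR_def using B.one_closed by (simp add: bij_one_apply cl)
      thus ?thesis by blast
    qed
  next
    fix a assume a: "a \<in> AutR S rf"
    hence ac: "a \<in> carrier (BijGroup S)" and h: "\<forall>u\<in>S. \<forall>v\<in>S. a (rf u v) = rf (a u) (a v)"
      by (auto simp: AutR_def)
    show "inv\<^bsub>BijGroup S\<^esub> a \<in> AutR S rf"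
      unfolding AutR_def
    proof (intro CollectI conjI ballI)
      show "inv\<^bsub>BijGroup S\<^esub> a \<in> carrier (BijGroup S)" using ac by simp
      fix u v assume u: "u \<in> S" and v: "v \<in> S"
      let ?i = "inv\<^bsub>BijGroup S\<^esub> a"
      have "a (rf (?i u) (?i v)) = rf u v"
        using h bij_inv_apply[OF ac u] bij_inv_apply[OF ac v] by simp
      hence "?i (a (rf (?i u) (?i v))) = ?i (rf u v)" by simp
      thus "?i (rf u v) = rf (?i u) (?i v)"
        using bij_inv_apply(2)[OF ac cl[OF bij_inv_apply(3)[OF ac u] bij_inv_apply(3)[OF ac v]]] by simp
    qed
  next
    fix a b assume "a \<in> AutR S rf" "b \<in> AutR S rf"
    thus "a \<otimes>\<^bsub>BijGroup S\<^esub> b \<in> AutR S rf"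
      by (auto simp: AutR_def bij_mult_apply cl bij_in)
  qed
qed

lemma s_aut: "x \<in> S \<Longrightarrow> elem_refl S rf x \<in> AutR S rf"
proof -
  assume x: "x \<in> S"
  have "\<forall>a\<in>S. \<forall>b\<in>S. elem_refl S rf x (rf a b) = rf (elem_refl S rf x a) (elem_refl S rf x b)"
    using x by (simp add: s_apply cl ds[OF x])
  thus ?thesis unfolding AutR_def using s_carrier[OF x] by blast
qed

lemma conj_s:
  assumes p: "\<phi> \<in> AutR S rf" and x: "x \<in> S"
  shows "\<phi> \<otimes>\<^bsub>BijGroup S\<^esub> elem_refl S rf x \<otimes>\<^bsub>BijGroup S\<^esub> inv\<^bsub>BijGroup S\<^esub> \<phi> = elem_refl S rf (\<phi> x)"
proof -
  interpret B: group "BijGroup S" by (rule group_BijGroup)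
  have pc: "\<phi> \<in> carrier (BijGroup S)" and h: "\<forall>u\<in>S. \<forall>v\<in>S. \<phi> (rf u v) = rf (\<phi> u) (\<phi> v)"
    using p by (auto simp: AutR_def)
  have px: "\<phi> x \<in> S" using bij_in[OF pc x] .
  show ?thesis
  proof (rule bij_eqI)
    show "\<phi> \<otimes>\<^bsub>BijGroup S\<^esub> elem_refl S rf x \<otimes>\<^bsub>BijGroup S\<^esub> inv\<^bsub>BijGroup S\<^esub> \<phi> \<in> carrier (BijGroup S)"
      using pc s_carrier[OF x] by simp
    show "elem_refl S rf (\<phi> x) \<in> carrier (BijGroup S)" using s_carrier[OF px] .
    fix z assume z: "z \<in> S"
    have iz: "(inv\<^bsub>BijGroup S\<^esub> \<phi>) z \<in> S" using bij_inv_apply(3)[OF pc z] .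
    show "(\<phi> \<otimes>\<^bsub>BijGroup S\<^esub> elem_refl S rf x \<otimes>\<^bsub>BijGroup S\<^esub> inv\<^bsub>BijGroup S\<^esub> \<phi>) z = elem_refl S rf (\<phi> x) z"
      using pc s_carrier[OF x] z iz h x bij_inv_apply(1)[OF pc z]
      by (simp add: bij_mult_apply s_apply)
  qed
qed

end

lemma conj_closed:
  fixes S :: "'x set" and so :: "'x \<Rightarrow> 'x" and W
  defines "c \<equiv> \<lambda>t. so \<otimes>\<^bsub>BijGroup S\<^esub> t \<otimes>\<^bsub>BijGroup S\<^esub> so"
  assumes so: "so \<in> carrier (BijGroup S)" "so \<otimes>\<^bsub>BijGroup S\<^esub> so = \<one>\<^bsub>BijGroup S\<^esub>"
    and W: "W \<subseteq> carrier (BijGroup S)" "\<And>w. w \<in> W \<Longrightarrow> c w \<in> generate (BijGroup S) W"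
    and t: "t \<in> generate (BijGroup S) W"
  shows "c t \<in> generate (BijGroup S) W"
  using t
proof (induction rule: generate.induct)
  interpret B: group "BijGroup S" by (rule group_BijGroup)
  have iso: "inv\<^bsub>BijGroup S\<^esub> so = so" using so B.inv_equality by blast
  {
    case one
    show ?case using so by (simp add: c_def generate.one)
  next
    case (incl h) thus ?case using W by simp
  next
    case (inv h)
    have hc: "h \<in> carrier (BijGroup S)" using inv W by auto
    have "c (inv\<^bsub>BijGroup S\<^esub> h) = inv\<^bsub>BijGroup S\<^esub> (c h)"
      unfolding c_def using hc so(1) iso by (simp add: B.inv_mult_group B.m_assoc)
    thus ?case using B.generate_m_inv_closed[OF W(1) W(2)[OF inv]] by simp
  next
    case (eng h1 h2)
    have h1: "h1 \<in> carrier (BijGroup S)" "h2 \<in> carrier (BijGroup S)"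
      using eng.hyps B.generate_in_carrier W(1) by auto
    have "c (h1 \<otimes>\<^bsub>BijGroup S\<^esub> h2) = c h1 \<otimes>\<^bsub>BijGroup S\<^esub> c h2"
    proof -
      have "c h1 \<otimes>\<^bsub>BijGroup S\<^esub> c h2 = so \<otimes>\<^bsub>BijGroup S\<^esub> h1 \<otimes>\<^bsub>BijGroup S\<^esub> (so \<otimes>\<^bsub>BijGroup S\<^esub> so) \<otimes>\<^bsub>BijGroup S\<^esub> h2 \<otimes>\<^bsub>BijGroup S\<^esub> so"
        unfolding c_def using h1 so(1) by (simp add: B.m_assoc)
      also have "\<dots> = c (h1 \<otimes>\<^bsub>BijGroup S\<^esub> h2)"
        unfolding c_def using h1 so by (simp add: B.m_assoc)
      finally show ?thesis by simp
    qed
    thus ?case using eng.IH generate.eng by metis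
  }
qed

theorem proposition4p1:
  fixes G :: "('a, 'b) monoid_scheme" and TG :: "'a topology"
    and \<theta> :: "'a \<Rightarrow> 'a"
    and TQ :: "'a set topology"
    and TX :: "'x topology" and rf :: "'x \<Rightarrow> 'x \<Rightarrow> 'x" and bp :: 'x
    and \<iota> :: "'a set \<Rightarrow> 'x"
    and I :: "'i set" and g :: "'i \<Rightarrow> 'a" and T :: "'i \<Rightarrow> ('x \<Rightarrow> 'x)"
  defines "K \<equiv> {k \<in> carrier G. \<theta> k = k}"
  defines "GK \<equiv> {h <#\<^bsub>G\<^esub> K | h. h \<in> carrier G}"
  defines "Xs \<equiv> topspace TX"
  assumes topgrp: "topological_group G TG"
    and aut: "\<theta> \<in> iso G G" and cont_\<theta>: "continuous_map TG TG \<theta>"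
    and invol: "\<forall>x\<in>carrier G. \<theta> (\<theta> x) = x"
    and quot: "quotient_map TG TQ (\<lambda>h. h <#\<^bsub>G\<^esub> K)"
    and refl: "reflection_space TX rf"
    and emb: "embedding_map TQ TX \<iota>"
    and sub_refl: "\<forall>h1\<in>carrier G. \<forall>h2\<in>carrier G.
        rf (\<iota> (h1 <#\<^bsub>G\<^esub> K)) (\<iota> (h2 <#\<^bsub>G\<^esub> K))
        = \<iota> ((h1 \<otimes>\<^bsub>G\<^esub> inv\<^bsub>G\<^esub> (\<theta> h1) \<otimes>\<^bsub>G\<^esub> \<theta> h2) <#\<^bsub>G\<^esub> K)"
    and base: "bp = \<iota> (\<one>\<^bsub>G\<^esub> <#\<^bsub>G\<^esub> K)"
    and gen_sys: "g ` I \<subseteq> carrier G" "generate G (g ` I) = carrier G"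
    and T_in: "\<forall>i\<in>I. T i \<in> Trans_restr Xs rf bp (\<iota> ` GK)"
    and T_act: "\<forall>i\<in>I. \<forall>h\<in>carrier G. T i (\<iota> (h <#\<^bsub>G\<^esub> K)) = \<iota> ((g i \<otimes>\<^bsub>G\<^esub> h) <#\<^bsub>G\<^esub> K)"
  shows "generate (BijGroup Xs)
           (T ` I \<union> (\<lambda>i. lconj (BijGroup Xs) (elem_refl Xs rf bp) (inv\<^bsub>BijGroup Xs\<^esub> (T i))) ` I)
         = Trans_restr Xs rf bp (\<iota> ` GK)"
proof -
  interpret B: group "BijGroup Xs" by (rule group_BijGroup)
  interpret Gr: group G using topgrp by (simp add: topological_group_def)
  have rf_cont: "continuous_map (prod_topology TX TX) TX (\<lambda>(x, y). rf x y)"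
    using refl by (simp add: reflection_space_def)
  have cl: "rf x y \<in> Xs" if "x \<in> Xs" "y \<in> Xs" for x y
    using continuous_map_image_subset_topspace[OF rf_cont] that unfolding Xs_def
    by (force simp: topspace_prod_topology)
  interpret R: rsp Xs rf
  proof
    fix x y z assume "x \<in> Xs" "y \<in> Xs"
    thus "rf x y \<in> Xs" by (rule cl)
    show "rf x (rf x y) = y" using refl \<open>x \<in> Xs\<close> \<open>y \<in> Xs\<close>
      unfolding reflection_space_def Xs_def by blast
    assume "z \<in> Xs"
    thus "rf x (rf y z) = rf (rf x y) (rf x z)" using refl \<open>x \<in> Xs\<close> \<open>y \<in> Xs\<close>
      unfolding reflection_space_def Xs_def by blast
  qed
  define P where "P = (\<lambda>h. \<iota> (h <#\<^bsub>G\<^esub> K))"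
  have tg: "topspace TG = carrier G" using topgrp by (simp add: topological_group_def)
  have P_in: "P h \<in> Xs" if "h \<in> carrier G" for h
  proof -
    have "h <#\<^bsub>G\<^esub> K \<in> topspace TQ"
      using quotient_imp_surjective_map[OF quot] that tg by blast
    moreover have "\<iota> ` topspace TQ \<subseteq> topspace TX"
      using emb unfolding embedding_map_def
      by (metis homeomorphic_imp_surjective_map inf_le1 topspace_subtopology)
    ultimately show ?thesis unfolding P_def Xs_def by blast
  qed
  have bpP: "bp = P \<one>\<^bsub>G\<^esub>" using base by (simp add: P_def)
  have bpX: "bp \<in> Xs" using bpP P_in by simp
  define so where "so = elem_refl Xs rf bp"
  have soc: "so \<in> carrier (BijGroup Xs)" using R.s_carrier bpX so_def by simp
  have sosq: "so \<otimes>\<^bsub>BijGroup Xs\<^esub> so = \<one>\<^bsub>BijGroup Xs\<^esub>" using R.s_sq bpX so_def by simp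
  have iso: "inv\<^bsub>BijGroup Xs\<^esub> so = so" using R.s_inv bpX so_def by simp
  define c where "c = (\<lambda>t. so \<otimes>\<^bsub>BijGroup Xs\<^esub> t \<otimes>\<^bsub>BijGroup Xs\<^esub> so)"
  define Gens where "Gens = {elem_refl Xs rf y \<otimes>\<^bsub>BijGroup Xs\<^esub> elem_refl Xs rf bp | y. y \<in> \<iota> ` GK}"
  define Rg where "Rg = Trans_restr Xs rf bp (\<iota> ` GK)"
  have Rg_def': "Rg = generate (BijGroup Xs) Gens" unfolding Rg_def Gens_def Trans_restr_def by simp
  have GKX: "y \<in> Xs" if "y \<in> \<iota> ` GK" for y using that P_in unfolding GK_def P_def by auto
  have Gens_c: "Gens \<subseteq> carrier (BijGroup Xs)"
    unfolding Gens_def using GKX R.s_carrier bpX by auto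
  have Rsub: "subgroup Rg (BijGroup Xs)" unfolding Rg_def' by (rule B.generate_is_subgroup[OF Gens_c])
  have Rc: "c t \<in> Rg" if "t \<in> Rg" for t
    unfolding Rg_def' c_def
  proof (rule conj_closed[OF soc sosq Gens_c _ that[unfolded Rg_def']])
    fix w assume "w \<in> Gens"
    then obtain y where y: "y \<in> \<iota> ` GK" and w: "w = elem_refl Xs rf y \<otimes>\<^bsub>BijGroup Xs\<^esub> so"
      unfolding Gens_def so_def by auto
    have syc: "elem_refl Xs rf y \<in> carrier (BijGroup Xs)" using R.s_carrier GKX[OF y] by simp
    have "so \<otimes>\<^bsub>BijGroup Xs\<^esub> w \<otimes>\<^bsub>BijGroup Xs\<^esub> so = inv\<^bsub>BijGroup Xs\<^esub> w"
      unfolding w using syc soc sosq iso R.s_inv[OF GKX[OF y]] by (simp add: B.inv_mult_group B.m_assoc)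
    thus "so \<otimes>\<^bsub>BijGroup Xs\<^esub> w \<otimes>\<^bsub>BijGroup Xs\<^esub> so \<in> generate (BijGroup Xs) Gens"
      using generate.inv[OF \<open>w \<in> Gens\<close>] by simp
  qed
  define Sf where "Sf = (\<lambda>i. lconj (BijGroup Xs) (elem_refl Xs rf bp) (inv\<^bsub>BijGroup Xs\<^esub> (T i)))"
  have TcR: "T i \<in> Rg" if "i \<in> I" for i using T_in that Rg_def by simp
  have Tc: "T i \<in> carrier (BijGroup Xs)" if "i \<in> I" for i
    using subgroup.mem_carrier[OF Rsub TcR[OF that]] .
  have Sf_eq: "Sf i = c (inv\<^bsub>BijGroup Xs\<^esub> (T i))" for i
    unfolding Sf_def lconj_def c_def so_def[symmetric] iso ..
  define W where "W = T ` I \<union> Sf ` I"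
  have Wc: "W \<subseteq> carrier (BijGroup Xs)" unfolding W_def Sf_eq c_def using Tc soc by auto
  define H where "H = generate (BijGroup Xs) W"
  have Hsub: "subgroup H (BijGroup Xs)" unfolding H_def by (rule B.generate_is_subgroup[OF Wc])
  have Hc: "c t \<in> H" if "t \<in> H" for t
    unfolding H_def c_def
  proof (rule conj_closed[OF soc sosq Wc _ that[unfolded H_def]])
    fix w assume wW: "w \<in> W"
    show "so \<otimes>\<^bsub>BijGroup Xs\<^esub> w \<otimes>\<^bsub>BijGroup Xs\<^esub> so \<in> generate (BijGroup Xs) W"
    proof (cases "w \<in> T ` I")
      case True
      then obtain i where i: "i \<in> I" "w = T i" by auto
      have "so \<otimes>\<^bsub>BijGroup Xs\<^esub> w \<otimes>\<^bsub>BijGroup Xs\<^esub> so = inv\<^bsub>BijGroup Xs\<^esub> (Sf i)"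
        unfolding Sf_eq c_def i using Tc[OF i(1)] soc iso by (simp add: B.inv_mult_group B.m_assoc)
      moreover have "Sf i \<in> W" using i W_def by auto
      ultimately show ?thesis using generate.inv by metis
    next
      case False
      then obtain i where i: "i \<in> I" "w = Sf i" using wW W_def by auto
      have "so \<otimes>\<^bsub>BijGroup Xs\<^esub> w \<otimes>\<^bsub>BijGroup Xs\<^esub> so = inv\<^bsub>BijGroup Xs\<^esub> (T i)"
        unfolding Sf_eq c_def i using Tc[OF i(1)] soc sosq
        by (simp add: B.m_assoc[symmetric]) (simp add: B.m_assoc)
      moreover have "T i \<in> W" using i W_def by auto
      ultimately show ?thesis using generate.inv by metis
    qed
  qed
  have HR: "H \<subseteq> Rg"
    unfolding H_def
  proof (rule B.generate_subgroup_incl[OF _ Rsub])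
    show "W \<subseteq> Rg"
    proof
      fix w assume "w \<in> W"
      then consider i where "i \<in> I" "w = T i" | i where "i \<in> I" "w = Sf i" unfolding W_def by auto
      thus "w \<in> Rg"
      proof cases
        case 1 thus ?thesis using TcR by simp
      next
        case 2
        have "inv\<^bsub>BijGroup Xs\<^esub> (T i) \<in> Rg" using subgroup.m_inv_closed[OF Rsub TcR[OF 2(1)]] .
        thus ?thesis using 2 Sf_eq Rc by simp
      qed
    qed
  qed
  define A where "A = {a \<in> carrier G. \<exists>T'\<in>H. \<forall>h\<in>carrier G. T' (P h) = P (a \<otimes>\<^bsub>G\<^esub> h)}"
  have Asub: "subgroup A G"
  proof (rule Gr.subgroupI)
    show "A \<subseteq> carrier G" unfolding A_def by auto
    have "\<one>\<^bsub>BijGroup Xs\<^esub> \<in> H" using subgroup.one_closed[OF Hsub] .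
    moreover have "\<forall>h\<in>carrier G. \<one>\<^bsub>BijGroup Xs\<^esub> (P h) = P (\<one>\<^bsub>G\<^esub> \<otimes>\<^bsub>G\<^esub> h)"
      by (simp add: P_in bij_one_apply)
    ultimately have "\<one>\<^bsub>G\<^esub> \<in> A" unfolding A_def by blast
    thus "A \<noteq> {}" by blast
  next
    fix a assume "a \<in> A"
    then obtain T' where a: "a \<in> carrier G" and T': "T' \<in> H" "\<forall>h\<in>carrier G. T' (P h) = P (a \<otimes>\<^bsub>G\<^esub> h)"
      unfolding A_def by auto
    have T'c: "T' \<in> carrier (BijGroup Xs)" using subgroup.mem_carrier[OF Hsub T'(1)] .
    have "\<forall>h\<in>carrier G. (inv\<^bsub>BijGroup Xs\<^esub> T') (P h) = P (inv\<^bsub>G\<^esub> a \<otimes>\<^bsub>G\<^esub> h)"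
    proof
      fix h assume h: "h \<in> carrier G"
      have "T' (P (inv\<^bsub>G\<^esub> a \<otimes>\<^bsub>G\<^esub> h)) = P h"
        using T'(2) a h by (simp add: Gr.m_assoc[symmetric])
      hence "(inv\<^bsub>BijGroup Xs\<^esub> T') (T' (P (inv\<^bsub>G\<^esub> a \<otimes>\<^bsub>G\<^esub> h))) = (inv\<^bsub>BijGroup Xs\<^esub> T') (P h)" by simp
      thus "(inv\<^bsub>BijGroup Xs\<^esub> T') (P h) = P (inv\<^bsub>G\<^esub> a \<otimes>\<^bsub>G\<^esub> h)"
        using bij_inv_apply(2)[OF T'c P_in] a h by simp
    qed
    moreover have "inv\<^bsub>BijGroup Xs\<^esub> T' \<in> H" using subgroup.m_inv_closed[OF Hsub T'(1)] .
    ultimately show "inv\<^bsub>G\<^esub> a \<in> A" unfolding A_def using a by blast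
  next
    fix a b assume "a \<in> A" "b \<in> A"
    then obtain Ta Tb where a: "a \<in> carrier G" "Ta \<in> H" "\<forall>h\<in>carrier G. Ta (P h) = P (a \<otimes>\<^bsub>G\<^esub> h)"
      and b: "b \<in> carrier G" "Tb \<in> H" "\<forall>h\<in>carrier G. Tb (P h) = P (b \<otimes>\<^bsub>G\<^esub> h)"
      unfolding A_def by auto
    have Tac: "Ta \<in> carrier (BijGroup Xs)" "Tb \<in> carrier (BijGroup Xs)"
      using subgroup.mem_carrier[OF Hsub a(2)] subgroup.mem_carrier[OF Hsub b(2)] by auto
    have "\<forall>h\<in>carrier G. (Ta \<otimes>\<^bsub>BijGroup Xs\<^esub> Tb) (P h) = P ((a \<otimes>\<^bsub>G\<^esub> b) \<otimes>\<^bsub>G\<^esub> h)"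
      using a b Tac P_in by (simp add: bij_mult_apply Gr.m_assoc)
    moreover have "Ta \<otimes>\<^bsub>BijGroup Xs\<^esub> Tb \<in> H" using subgroup.m_closed[OF Hsub a(2) b(2)] .
    ultimately show "a \<otimes>\<^bsub>G\<^esub> b \<in> A" unfolding A_def using a b by blast
  qed
  have "g ` I \<subseteq> A"
  proof
    fix x assume "x \<in> g ` I"
    then obtain i where i: "i \<in> I" "x = g i" by auto
    have "T i \<in> H" unfolding H_def W_def using i by (auto intro: generate.incl)
    thus "x \<in> A" unfolding A_def using i gen_sys(1) T_act P_def by auto
  qed
  hence AG: "carrier G \<subseteq> A" using Gr.generate_subgroup_incl[OF _ Asub] gen_sys(2) by blast
  have "Gens \<subseteq> H"
  proof
    fix w assume "w \<in> Gens"
    then obtain h where h: "h \<in> carrier G" and w: "w = elem_refl Xs rf (P h) \<otimes>\<^bsub>BijGroup Xs\<^esub> so"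
      unfolding Gens_def so_def GK_def P_def by auto
    obtain T' where T': "T' \<in> H" "\<forall>h'\<in>carrier G. T' (P h') = P (h \<otimes>\<^bsub>G\<^esub> h')"
      using AG h unfolding A_def by auto
    have T'c: "T' \<in> carrier (BijGroup Xs)" using subgroup.mem_carrier[OF Hsub T'(1)] .
    have T'o: "T' bp = P h" using T'(2) bpP h by simp
    have RA: "Rg \<subseteq> AutR Xs rf"
      unfolding Rg_def'
    proof (rule B.generate_subgroup_incl[OF _ R.aut_subgroup])
      show "Gens \<subseteq> AutR Xs rf"
        unfolding Gens_def using GKX R.s_aut bpX subgroup.m_closed[OF R.aut_subgroup] by auto
    qed
    have T'A: "T' \<in> AutR Xs rf" using T' HR RA by blast
    have "elem_refl Xs rf (P h) = T' \<otimes>\<^bsub>BijGroup Xs\<^esub> so \<otimes>\<^bsub>BijGroup Xs\<^esub> inv\<^bsub>BijGroup Xs\<^esub> T'"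
      using R.conj_s[OF T'A bpX] T'o so_def by simp
    hence "w = T' \<otimes>\<^bsub>BijGroup Xs\<^esub> c (inv\<^bsub>BijGroup Xs\<^esub> T')"
      unfolding w c_def using T'c soc by (simp add: B.m_assoc)
    moreover have "c (inv\<^bsub>BijGroup Xs\<^esub> T') \<in> H" using Hc subgroup.m_inv_closed[OF Hsub T'(1)] by simp
    ultimately show "w \<in> H" using subgroup.m_closed[OF Hsub T'(1)] by simp
  qed
  hence "Rg \<subseteq> H" unfolding Rg_def' by (rule B.generate_subgroup_incl[OF _ Hsub])
  with HR have "H = Rg" by blast
  thus ?thesis unfolding H_def W_def Sf_def Rg_def .
qed

end
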